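(* Let $\Lambda$ be a unital commutative ring and $q$ a non-negative integer. A Lie algebra $\mathfrak g$ over $\Lambda$ is $q$-capable if and only if $\mathfrak g\cong\operatorname{IDer}(\mathfrak m,q)$ for some Lie algebra $\mathfrak m$ over $\Lambda$.
   Context: $Z_q(\mathfrak m)=\{e\in Z(\mathfrak m)\mid qe=0\}$, where $Z(\mathfrak m)$ is the center of $\mathfrak m$. A Lie algebra $\mathfrak g$ is $q$-capable if $\mathfrak g\cong\mathfrak m/Z_q(\mathfrak m)$ for some Lie algebra $\mathfrak m$. For a Lie algebra $\mathfrak m$, $\operatorname{Der}(\mathfrak m)$ is the Lie algebra of derivations (bracket $[d,d']=dd'-d'd$), $d_m$ is the inner derivation $m'\mapsto[m,m']$, $\operatorname{Der}(\mathfrak m)\times q\mathfrak m$ is the Lie algebra with bracket $[(d,qm),(d',qm')]=([d,d'],q[m,m'])$, and $\operatorname{IDer}(\mathfrak m,q)=\{(d_m,qm)\mid m\in\mathfrak m\}$ is its Lie subalgebra of inner $q$-derivations. *)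

theory Defs
  imports "HOL-Library.FuncSet"
begin

record ('r, 'a) lie_alg =
  car  :: "'a set"
  ladd :: "'a \<Rightarrow> 'a \<Rightarrow> 'a"
  lzero :: "'a"
  lneg :: "'a \<Rightarrow> 'a"
  lsmul :: "'r \<Rightarrow> 'a \<Rightarrow> 'a"
  lbr  :: "'a \<Rightarrow> 'a \<Rightarrow> 'a"

definition lie_algebra :: "('r::comm_ring_1, 'a) lie_alg \<Rightarrow> bool" where
  "lie_algebra L \<longleftrightarrow>
     lzero L \<in> car L \<and>
     (\<forall>x\<in>car L. \<forall>y\<in>car L. ladd L x y \<in> car L \<and> lbr L x y \<in> car L) \<and>
     (\<forall>x\<in>car L. lneg L x \<in> car L \<and> (\<forall>a. lsmul L a x \<in> car L)) \<and>
     (\<forall>x\<in>car L. \<forall>y\<in>car L. \<forall>z\<in>car L.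
        ladd L (ladd L x y) z = ladd L x (ladd L y z)) \<and>
     (\<forall>x\<in>car L. \<forall>y\<in>car L. ladd L x y = ladd L y x) \<and>
     (\<forall>x\<in>car L. ladd L (lzero L) x = x) \<and>
     (\<forall>x\<in>car L. ladd L (lneg L x) x = lzero L) \<and>
     (\<forall>a. \<forall>x\<in>car L. \<forall>y\<in>car L. lsmul L a (ladd L x y) = ladd L (lsmul L a x) (lsmul L a y)) \<and>
     (\<forall>a b. \<forall>x\<in>car L. lsmul L (a + b) x = ladd L (lsmul L a x) (lsmul L b x)) \<and>
     (\<forall>a b. \<forall>x\<in>car L. lsmul L (a * b) x = lsmul L a (lsmul L b x)) \<and>
     (\<forall>x\<in>car L. lsmul L 1 x = x) \<and>
     (\<forall>x\<in>car L. \<forall>y\<in>car L. \<forall>z\<in>car L.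
        lbr L (ladd L x y) z = ladd L (lbr L x z) (lbr L y z) \<and>
        lbr L z (ladd L x y) = ladd L (lbr L z x) (lbr L z y)) \<and>
     (\<forall>a. \<forall>x\<in>car L. \<forall>y\<in>car L.
        lbr L (lsmul L a x) y = lsmul L a (lbr L x y) \<and>
        lbr L x (lsmul L a y) = lsmul L a (lbr L x y)) \<and>
     (\<forall>x\<in>car L. lbr L x x = lzero L) \<and>
     (\<forall>x\<in>car L. \<forall>y\<in>car L. \<forall>z\<in>car L.
        ladd L (ladd L (lbr L x (lbr L y z)) (lbr L y (lbr L z x))) (lbr L z (lbr L x y)) = lzero L)"

definition lie_hom :: "('r, 'a) lie_alg \<Rightarrow> ('r, 'b) lie_alg \<Rightarrow> ('a \<Rightarrow> 'b) \<Rightarrow> bool" where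
  "lie_hom L M f \<longleftrightarrow> f \<in> car L \<rightarrow> car M \<and>
     (\<forall>x\<in>car L. \<forall>y\<in>car L. f (ladd L x y) = ladd M (f x) (f y) \<and>
                             f (lbr L x y) = lbr M (f x) (f y)) \<and>
     (\<forall>a. \<forall>x\<in>car L. f (lsmul L a x) = lsmul M a (f x))"

definition lie_iso :: "('r, 'a) lie_alg \<Rightarrow> ('r, 'b) lie_alg \<Rightarrow> ('a \<Rightarrow> 'b) \<Rightarrow> bool" where
  "lie_iso L M f \<longleftrightarrow> lie_hom L M f \<and> bij_betw f (car L) (car M)"

definition lie_isomorphic :: "('r, 'a) lie_alg \<Rightarrow> ('r, 'b) lie_alg \<Rightarrow> bool" where
  "lie_isomorphic L M \<longleftrightarrow> (\<exists>f. lie_iso L M f)"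

definition lcoset :: "('r, 'a) lie_alg \<Rightarrow> 'a \<Rightarrow> 'a set \<Rightarrow> 'a set" where
  "lcoset L x I = {ladd L x i | i. i \<in> I}"

definition lrep :: "'a set \<Rightarrow> 'a" where
  "lrep C = (SOME c. c \<in> C)"

definition lie_quot :: "('r, 'a) lie_alg \<Rightarrow> 'a set \<Rightarrow> ('r, 'a set) lie_alg" where
  "lie_quot L I =
    \<lparr> car = {lcoset L x I | x. x \<in> car L},
      ladd = (\<lambda>C D. lcoset L (ladd L (lrep C) (lrep D)) I),
      lzero = lcoset L (lzero L) I,
      lneg = (\<lambda>C. lcoset L (lneg L (lrep C)) I),
      lsmul = (\<lambda>a C. lcoset L (lsmul L a (lrep C)) I),
      lbr = (\<lambda>C D. lcoset L (lbr L (lrep C) (lrep D)) I) \<rparr>"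

definition lie_center :: "('r, 'a) lie_alg \<Rightarrow> 'a set" where
  "lie_center L = {e \<in> car L. \<forall>m\<in>car L. lbr L e m = lzero L}"

text \<open>Z_q(m) = {e in Z(m) | q e = 0}; q e is the q-fold sum, i.e. (of_nat q) acting.\<close>
definition Zq :: "('r::comm_ring_1, 'a) lie_alg \<Rightarrow> nat \<Rightarrow> 'a set" where
  "Zq L q = {e \<in> lie_center L. lsmul L (of_nat q) e = lzero L}"

text \<open>q-capable, with the witnessing Lie algebra ranging over carrier type 'b.\<close>
definition q_capable :: "('r::comm_ring_1, 'a) lie_alg \<Rightarrow> nat \<Rightarrow> 'b itself \<Rightarrow> bool" where
  "q_capable g q (_::'b itself) \<longleftrightarrow>
     (\<exists>M :: ('r, 'b) lie_alg. lie_algebra M \<and> lie_isomorphic g (lie_quot M (Zq M q)))"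

definition lie_der :: "('r, 'a) lie_alg \<Rightarrow> ('a \<Rightarrow> 'a) set" where
  "lie_der L = {d. d \<in> extensional (car L) \<and> d \<in> car L \<rightarrow> car L \<and>
     (\<forall>x\<in>car L. \<forall>y\<in>car L. d (ladd L x y) = ladd L (d x) (d y) \<and>
        d (lbr L x y) = ladd L (lbr L (d x) y) (lbr L x (d y))) \<and>
     (\<forall>a. \<forall>x\<in>car L. d (lsmul L a x) = lsmul L a (d x))}"

definition inner_der :: "('r, 'a) lie_alg \<Rightarrow> 'a \<Rightarrow> ('a \<Rightarrow> 'a)" where
  "inner_der L m = restrict (\<lambda>x. lbr L m x) (car L)"

definition qmult :: "('r::comm_ring_1, 'a) lie_alg \<Rightarrow> nat \<Rightarrow> 'a set" where
  "qmult L q = {lsmul L (of_nat q) m | m. m \<in> car L}"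

definition qpre :: "('r::comm_ring_1, 'a) lie_alg \<Rightarrow> nat \<Rightarrow> 'a \<Rightarrow> 'a" where
  "qpre L q x = (SOME m. m \<in> car L \<and> x = lsmul L (of_nat q) m)"

text \<open>The Lie algebra Der(m) x qm with [(d,qm),(d',qm')] = ([d,d'], q[m,m']).\<close>
definition der_times_q :: "('r::comm_ring_1, 'a) lie_alg \<Rightarrow> nat \<Rightarrow> ('r, ('a \<Rightarrow> 'a) \<times> 'a) lie_alg" where
  "der_times_q L q =
    \<lparr> car = lie_der L \<times> qmult L q,
      ladd = (\<lambda>(d, x) (d', x'). (restrict (\<lambda>y. ladd L (d y) (d' y)) (car L), ladd L x x')),
      lzero = (restrict (\<lambda>y. lzero L) (car L), lzero L),
      lneg = (\<lambda>(d, x). (restrict (\<lambda>y. lneg L (d y)) (car L), lneg L x)),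
      lsmul = (\<lambda>a (d, x). (restrict (\<lambda>y. lsmul L a (d y)) (car L), lsmul L a x)),
      lbr = (\<lambda>(d, x) (d', x').
               (restrict (\<lambda>y. ladd L (d (d' y)) (lneg L (d' (d y)))) (car L),
                lsmul L (of_nat q) (lbr L (qpre L q x) (qpre L q x')))) \<rparr>"

definition IDer :: "('r::comm_ring_1, 'a) lie_alg \<Rightarrow> nat \<Rightarrow> ('r, ('a \<Rightarrow> 'a) \<times> 'a) lie_alg" where
  "IDer L q = (der_times_q L q)
     \<lparr> car := {(inner_der L m, lsmul L (of_nat q) m) | m. m \<in> car L} \<rparr>"

end

theory Submission
  imports Defs
begin

locale lie =
  fixes M :: "('r::comm_ring_1, 'a) lie_alg"
  assumes la: "lie_algebra M"
begin

lemma zero_c[simp]: "lzero M \<in> car M"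
  and add_c[simp]: "x \<in> car M \<Longrightarrow> y \<in> car M \<Longrightarrow> ladd M x y \<in> car M"
  and br_c[simp]: "x \<in> car M \<Longrightarrow> y \<in> car M \<Longrightarrow> lbr M x y \<in> car M"
  and neg_c[simp]: "x \<in> car M \<Longrightarrow> lneg M x \<in> car M"
  and smul_c[simp]: "x \<in> car M \<Longrightarrow> lsmul M a x \<in> car M"
  using la unfolding lie_algebra_def by auto

lemma assoc: "x \<in> car M \<Longrightarrow> y \<in> car M \<Longrightarrow> z \<in> car M \<Longrightarrow>
    ladd M (ladd M x y) z = ladd M x (ladd M y z)"
  and comm: "x \<in> car M \<Longrightarrow> y \<in> car M \<Longrightarrow> ladd M x y = ladd M y x"
  and lzero[simp]: "x \<in> car M \<Longrightarrow> ladd M (lzero M) x = x"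
  and lneg[simp]: "x \<in> car M \<Longrightarrow> ladd M (lneg M x) x = lzero M"
  and smul_add: "x \<in> car M \<Longrightarrow> y \<in> car M \<Longrightarrow> lsmul M a (ladd M x y) = ladd M (lsmul M a x) (lsmul M a y)"
  and smul_mult: "x \<in> car M \<Longrightarrow> lsmul M (a * b) x = lsmul M a (lsmul M b x)"
  and br_addl: "x \<in> car M \<Longrightarrow> y \<in> car M \<Longrightarrow> z \<in> car M \<Longrightarrow> lbr M (ladd M x y) z = ladd M (lbr M x z) (lbr M y z)"
  and br_addr: "x \<in> car M \<Longrightarrow> y \<in> car M \<Longrightarrow> z \<in> car M \<Longrightarrow> lbr M z (ladd M x y) = ladd M (lbr M z x) (lbr M z y)"
  and br_smull: "x \<in> car M \<Longrightarrow> y \<in> car M \<Longrightarrow> lbr M (lsmul M a x) y = lsmul M a (lbr M x y)"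
  and br_smulr: "x \<in> car M \<Longrightarrow> y \<in> car M \<Longrightarrow> lbr M x (lsmul M a y) = lsmul M a (lbr M x y)"
  and br_self: "x \<in> car M \<Longrightarrow> lbr M x x = lzero M"
  and jacobi: "x \<in> car M \<Longrightarrow> y \<in> car M \<Longrightarrow> z \<in> car M \<Longrightarrow>
     ladd M (ladd M (lbr M x (lbr M y z)) (lbr M y (lbr M z x))) (lbr M z (lbr M x y)) = lzero M"
  using la unfolding lie_algebra_def by auto

lemma rzero[simp]: "x \<in> car M \<Longrightarrow> ladd M x (lzero M) = x"
  using comm[of x "lzero M"] by simp

lemma rneg[simp]: "x \<in> car M \<Longrightarrow> ladd M x (lneg M x) = lzero M"
  using comm[of x "lneg M x"] by simp

lemma cancel: assumes "x \<in> car M" "y \<in> car M" "z \<in> car M" "ladd M x y = ladd M x z"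
  shows "y = z"
proof -
  have 1: "y = ladd M (lneg M x) (ladd M x y)" using assms assoc[of "lneg M x" x y] by simp
  have 2: "z = ladd M (lneg M x) (ladd M x z)" using assms assoc[of "lneg M x" x z] by simp
  have "y = ladd M (lneg M x) (ladd M x z)" using 1 unfolding assms(4) .
  also have "\<dots> = z" using 2 by (rule sym)
  finally show ?thesis .
qed

lemma neg_unique: assumes "x \<in> car M" "y \<in> car M" "ladd M x y = lzero M"
  shows "x = lneg M y"
  using cancel[of y x "lneg M y"] assms comm[of x y] by simp

lemma idem_zero: assumes "x \<in> car M" "ladd M x x = x" shows "x = lzero M"
  using cancel[of x x "lzero M"] assms by simp

lemma br_zerol[simp]: "y \<in> car M \<Longrightarrow> lbr M (lzero M) y = lzero M"
  using idem_zero[of "lbr M (lzero M) y"] br_addl[of "lzero M" "lzero M" y] by simp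

lemma smul_zero[simp]: "lsmul M a (lzero M) = lzero M"
  using idem_zero[of "lsmul M a (lzero M)"] smul_add[of "lzero M" "lzero M" a] by simp

lemma br_negl: assumes "x \<in> car M" "y \<in> car M" shows "lbr M (lneg M x) y = lneg M (lbr M x y)"
  using neg_unique[of "lbr M (lneg M x) y" "lbr M x y"] br_addl[of "lneg M x" x y] assms by simp

lemma br_zeror[simp]: "y \<in> car M \<Longrightarrow> lbr M y (lzero M) = lzero M"
  using idem_zero[of "lbr M y (lzero M)"] br_addr[of "lzero M" "lzero M" y] by simp

lemma br_negr: assumes "x \<in> car M" "y \<in> car M" shows "lbr M y (lneg M x) = lneg M (lbr M y x)"
  using neg_unique[of "lbr M y (lneg M x)" "lbr M y x"] br_addr[of "lneg M x" x y] assms by simp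

lemma br_anti: assumes "x \<in> car M" "y \<in> car M" shows "lbr M x y = lneg M (lbr M y x)"
proof -
  have "lzero M = lbr M (ladd M x y) (ladd M x y)" using assms br_self by simp
  also have "\<dots> = ladd M (ladd M (lbr M x x) (lbr M y x)) (ladd M (lbr M x y) (lbr M y y))"
    using assms by (simp add: br_addl br_addr)
  also have "\<dots> = ladd M (lbr M y x) (lbr M x y)" using assms by (simp add: br_self)
  finally have e: "ladd M (lbr M x y) (lbr M y x) = lzero M"
    using assms comm[of "lbr M y x" "lbr M x y"] by simp
  show ?thesis by (rule neg_unique) (simp_all add: assms e)
qed

lemma neg_zero[simp]: "lneg M (lzero M) = lzero M"
  by (rule neg_unique[symmetric]) simp_all

lemma smul_neg: assumes "x \<in> car M" shows "lsmul M a (lneg M x) = lneg M (lsmul M a x)"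
  using neg_unique[of "lsmul M a (lneg M x)" "lsmul M a x"] smul_add[of "lneg M x" x a] assms by simp

lemma smul_comm: assumes "x \<in> car M" shows "lsmul M a (lsmul M b x) = lsmul M b (lsmul M a x)"
  using smul_mult[of x a b] smul_mult[of x b a] assms by (simp add: mult.commute)

lemma neg_add: assumes "x \<in> car M" "y \<in> car M"
  shows "lneg M (ladd M x y) = ladd M (lneg M x) (lneg M y)"
proof -
  have e: "ladd M (ladd M (lneg M x) (lneg M y)) (ladd M x y) = lzero M"
  proof -
    have "ladd M (ladd M (lneg M x) (lneg M y)) (ladd M x y)
        = ladd M (lneg M x) (ladd M (lneg M y) (ladd M y x))"
      using assms by (simp add: assoc comm[of x y])
    also have "\<dots> = ladd M (lneg M x) (ladd M (ladd M (lneg M y) y) x)"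
      using assms assoc[of "lneg M y" y x] by simp
    finally show ?thesis using assms by simp
  qed
  show ?thesis by (rule neg_unique[symmetric]) (simp_all add: assms e)
qed

lemma neg_neg[simp]: "x \<in> car M \<Longrightarrow> lneg M (lneg M x) = x"
  by (rule neg_unique[symmetric]) simp_all

lemma inner_der_bracket: assumes "m \<in> car M" "n \<in> car M" "y \<in> car M"
  shows "ladd M (lbr M m (lbr M n y)) (lneg M (lbr M n (lbr M m y))) = lbr M (lbr M m n) y"
proof -
  let ?A = "lbr M m (lbr M n y)" and ?B = "lbr M n (lbr M m y)" and ?C = "lbr M (lbr M m n) y"
  have j: "ladd M (ladd M ?A (lbr M n (lbr M y m))) (lbr M y (lbr M m n)) = lzero M"
    using jacobi assms by simp
  have 1: "lbr M n (lbr M y m) = lneg M ?B"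
    using assms br_anti[of y m] br_negr[of "lbr M m y" n] by simp
  have 2: "lbr M y (lbr M m n) = lneg M ?C" using assms br_anti[of y "lbr M m n"] by simp
  have j': "ladd M (ladd M ?A (lneg M ?B)) (lneg M ?C) = lzero M" using j unfolding 1 2 .
  have "ladd M ?A (lneg M ?B) = lneg M (lneg M ?C)"
    by (rule neg_unique[OF _ _ j']) (simp_all add: assms)
  thus ?thesis using assms by simp
qed


definition pi :: "nat \<Rightarrow> 'a \<Rightarrow> ('a \<Rightarrow> 'a) \<times> 'a" where
  "pi q x = (inner_der M x, lsmul M (of_nat q) x)"

lemma Zq_sub: "Zq M q \<subseteq> car M" unfolding Zq_def lie_center_def by auto

lemma Zq_zero: "lzero M \<in> Zq M q" unfolding Zq_def lie_center_def by simp

lemma Zq_add: assumes "a \<in> Zq M q" "b \<in> Zq M q" shows "ladd M a b \<in> Zq M q"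
  using assms unfolding Zq_def lie_center_def by (auto simp: br_addl smul_add)

lemma Zq_neg: assumes "a \<in> Zq M q" shows "lneg M a \<in> Zq M q"
  using assms unfolding Zq_def lie_center_def
  by (auto simp: br_negl smul_neg)

lemma pi_Zq: assumes "x \<in> car M" "z \<in> Zq M q" shows "pi q (ladd M x z) = pi q x"
proof -
  have z: "z \<in> car M" "\<And>m. m \<in> car M \<Longrightarrow> lbr M z m = lzero M" "lsmul M (of_nat q) z = lzero M"
    using assms(2) unfolding Zq_def lie_center_def by auto
  show ?thesis unfolding pi_def inner_der_def using assms z
    by (auto simp: br_addl smul_add)
qed

lemma pi_inj: assumes "x \<in> car M" "y \<in> car M" "pi q x = pi q y"
  shows "ladd M (lneg M x) y \<in> Zq M q"
proof -
  have b: "lbr M x m = lbr M y m" if "m \<in> car M" for m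
    using assms that unfolding pi_def inner_der_def by (metis fst_conv restrict_apply')
  have s: "lsmul M (of_nat q) x = lsmul M (of_nat q) y" using assms unfolding pi_def by simp
  show ?thesis unfolding Zq_def lie_center_def using assms b s
    by (auto simp: br_addl br_negl smul_add smul_neg)
qed

lemma coset_shift: assumes "x \<in> car M" "z \<in> Zq M q"
  shows "lcoset M (ladd M x z) (Zq M q) = lcoset M x (Zq M q)"
proof -
  have zc: "z \<in> car M" using assms Zq_sub by auto
  show ?thesis unfolding lcoset_def
  proof (auto)
    fix i assume i: "i \<in> Zq M q"
    hence "i \<in> car M" using Zq_sub by auto
    thus "\<exists>j. ladd M (ladd M x z) i = ladd M x j \<and> j \<in> Zq M q"
      using assms zc i Zq_add by (intro exI[of _ "ladd M z i"]) (simp add: assoc)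
    have "ladd M x i = ladd M (ladd M x z) (ladd M (lneg M z) i)"
      using assms zc \<open>i \<in> car M\<close> by (simp add: assoc assoc[symmetric, of z "lneg M z"])
    thus "\<exists>j. ladd M x i = ladd M (ladd M x z) j \<and> j \<in> Zq M q"
      using Zq_add Zq_neg assms i by blast
  qed
qed

lemma coset_rep: assumes "x \<in> car M"
  shows "lrep (lcoset M x (Zq M q)) \<in> lcoset M x (Zq M q)"
proof -
  have "x \<in> lcoset M x (Zq M q)" unfolding lcoset_def using assms Zq_zero
    by (auto intro!: exI[of _ "lzero M"])
  thus ?thesis unfolding lrep_def by (rule someI)
qed

lemma pi_rep: assumes "x \<in> car M"
  shows "lrep (lcoset M x (Zq M q)) \<in> car M \<and> pi q (lrep (lcoset M x (Zq M q))) = pi q x"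
proof -
  obtain i where i: "i \<in> Zq M q" "lrep (lcoset M x (Zq M q)) = ladd M x i"
    using coset_rep[OF assms, of q] unfolding lcoset_def by auto
  have "i \<in> car M" using i Zq_sub by auto
  thus ?thesis using i assms pi_Zq by auto
qed

lemma Ider_add: assumes "x \<in> car M" "y \<in> car M"
  shows "ladd (IDer M q) (pi q x) (pi q y) = pi q (ladd M x y)"
  using assms unfolding IDer_def der_times_q_def pi_def inner_der_def
  by (auto simp: br_addl smul_add intro!: ext)

lemma Ider_smul: assumes "x \<in> car M"
  shows "lsmul (IDer M q) a (pi q x) = pi q (lsmul M a x)"
  using assms unfolding IDer_def der_times_q_def pi_def inner_der_def
  by (auto simp: br_smull smul_comm intro!: ext)

lemma qpre: assumes "x \<in> car M"
  shows "qpre M q (lsmul M (of_nat q) x) \<in> car M \<and>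
         lsmul M (of_nat q) (qpre M q (lsmul M (of_nat q) x)) = lsmul M (of_nat q) x"
proof -
  have "\<exists>m. m \<in> car M \<and> lsmul M (of_nat q) x = lsmul M (of_nat q) m" using assms by blast
  from someI_ex[OF this] show ?thesis unfolding qpre_def by auto
qed

lemma qbr: assumes "x \<in> car M" "y \<in> car M" "p \<in> car M" "p' \<in> car M"
  "lsmul M a p = lsmul M a x" "lsmul M a p' = lsmul M a y"
  shows "lsmul M a (lbr M p p') = lsmul M a (lbr M x y)"
  using assms by (metis br_smull br_smulr)

lemma Ider_br: assumes "x \<in> car M" "y \<in> car M"
  shows "lbr (IDer M q) (pi q x) (pi q y) = pi q (lbr M x y)"
proof -
  have 1: "lsmul M (of_nat q) (lbr M (qpre M q (lsmul M (of_nat q) x)) (qpre M q (lsmul M (of_nat q) y)))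
     = lsmul M (of_nat q) (lbr M x y)"
    using qbr qpre assms by blast
  have 2: "restrict (\<lambda>z. ladd M (inner_der M x (inner_der M y z)) (lneg M (inner_der M y (inner_der M x z)))) (car M)
     = inner_der M (lbr M x y)"
    unfolding inner_der_def using assms by (auto simp: inner_der_bracket intro!: ext)
  show ?thesis using 1 2 unfolding IDer_def der_times_q_def pi_def by simp
qed

lemma Ider_car: "car (IDer M q) = pi q ` car M"
  unfolding IDer_def pi_def by auto

definition phi where "phi q C = pi q (lrep C)"

lemma quot_car: "car (lie_quot M (Zq M q)) = (\<lambda>x. lcoset M x (Zq M q)) ` car M"
  unfolding lie_quot_def by auto

lemma phi_coset: "x \<in> car M \<Longrightarrow> phi q (lcoset M x (Zq M q)) = pi q x"
  using pi_rep unfolding phi_def by blast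

lemma quot_iso: "lie_iso (lie_quot M (Zq M q)) (IDer M q) (phi q)"
proof -
  have rep: "lrep (lcoset M x (Zq M q)) \<in> car M" if "x \<in> car M" for x using pi_rep that by blast
  have hom: "lie_hom (lie_quot M (Zq M q)) (IDer M q) (phi q)"
    unfolding lie_hom_def
  proof (intro conjI ballI allI)
    show "phi q \<in> car (lie_quot M (Zq M q)) \<rightarrow> car (IDer M q)"
      unfolding quot_car Ider_car using phi_coset by auto
  next
    fix C D assume C: "C \<in> car (lie_quot M (Zq M q))" and D: "D \<in> car (lie_quot M (Zq M q))"
    have rC: "lrep C \<in> car M" and rD: "lrep D \<in> car M"
      using C D rep unfolding quot_car by auto
    show "phi q (ladd (lie_quot M (Zq M q)) C D) = ladd (IDer M q) (phi q C) (phi q D)"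
      using rC rD by (simp add: lie_quot_def phi_coset Ider_add phi_def[of q C] phi_def[of q D])
    show "phi q (lbr (lie_quot M (Zq M q)) C D) = lbr (IDer M q) (phi q C) (phi q D)"
      using rC rD by (simp add: lie_quot_def phi_coset Ider_br phi_def[of q C] phi_def[of q D])
  next
    fix a C assume C: "C \<in> car (lie_quot M (Zq M q))"
    have rC: "lrep C \<in> car M" using C rep unfolding quot_car by auto
    show "phi q (lsmul (lie_quot M (Zq M q)) a C) = lsmul (IDer M q) a (phi q C)"
      using rC by (simp add: lie_quot_def phi_coset Ider_smul phi_def[of q C])
  qed
  have inj: "inj_on (phi q) (car (lie_quot M (Zq M q)))"
    unfolding quot_car inj_on_def
  proof (clarsimp simp: phi_coset)
    fix x y assume xy: "x \<in> car M" "y \<in> car M" "pi q x = pi q y"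
    have z: "ladd M (lneg M x) y \<in> Zq M q" using pi_inj xy by blast
    have "y = ladd M x (ladd M (lneg M x) y)" using xy by (simp add: assoc[symmetric])
    thus "lcoset M x (Zq M q) = lcoset M y (Zq M q)" using coset_shift[OF xy(1) z] by simp
  qed
  have surj: "phi q ` car (lie_quot M (Zq M q)) = car (IDer M q)"
    unfolding quot_car Ider_car image_image using phi_coset by auto
  show ?thesis unfolding lie_iso_def bij_betw_def using hom inj surj by blast
qed

lemma quot_closed1: "C \<in> car (lie_quot M (Zq M q)) \<Longrightarrow> D \<in> car (lie_quot M (Zq M q)) \<Longrightarrow>
   ladd (lie_quot M (Zq M q)) C D \<in> car (lie_quot M (Zq M q))"
  unfolding quot_car using pi_rep by (auto simp: lie_quot_def)

lemma quot_closed2: "C \<in> car (lie_quot M (Zq M q)) \<Longrightarrow> D \<in> car (lie_quot M (Zq M q)) \<Longrightarrow>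
   lbr (lie_quot M (Zq M q)) C D \<in> car (lie_quot M (Zq M q))"
  unfolding quot_car using pi_rep by (auto simp: lie_quot_def)

lemma quot_closed3: "C \<in> car (lie_quot M (Zq M q)) \<Longrightarrow>
   lsmul (lie_quot M (Zq M q)) a C \<in> car (lie_quot M (Zq M q))"
  unfolding quot_car using pi_rep by (auto simp: lie_quot_def)

end

lemma iso_comp: "lie_iso L M f \<Longrightarrow> lie_iso M N h \<Longrightarrow> lie_iso L N (h \<circ> f)"
  unfolding lie_iso_def lie_hom_def
  by (auto simp: bij_betw_trans Pi_iff)

lemma iso_inv:
  assumes iso: "lie_iso L M f"
    and cl1: "\<And>C D. C \<in> car L \<Longrightarrow> D \<in> car L \<Longrightarrow> ladd L C D \<in> car L"
    and cl2: "\<And>C D. C \<in> car L \<Longrightarrow> D \<in> car L \<Longrightarrow> lbr L C D \<in> car L"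
    and cl3: "\<And>C a. C \<in> car L \<Longrightarrow> lsmul L a C \<in> car L"
  shows "lie_iso M L (inv_into (car L) f)"
proof -
  have h: "lie_hom L M f" and b: "bij_betw f (car L) (car M)" using iso unfolding lie_iso_def by auto
  have b': "bij_betw (inv_into (car L) f) (car M) (car L)" using b by (rule bij_betw_inv_into)
  let ?g = "inv_into (car L) f"
  have gc: "y \<in> car M \<Longrightarrow> ?g y \<in> car L" for y using b' bij_betwE by blast
  have fg: "y \<in> car M \<Longrightarrow> f (?g y) = y" for y using b bij_betw_inv_into_right by metis
  have gf: "x \<in> car L \<Longrightarrow> ?g (f x) = x" for x using b bij_betw_inv_into_left by metis
  have "lie_hom M L ?g"
    unfolding lie_hom_def
  proof (intro conjI ballI allI)
    show "?g \<in> car M \<rightarrow> car L" using gc by auto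
  next
    fix x y assume xy: "x \<in> car M" "y \<in> car M"
    have "?g (ladd M x y) = ?g (f (ladd L (?g x) (?g y)))"
      using h xy gc fg unfolding lie_hom_def by simp
    thus "?g (ladd M x y) = ladd L (?g x) (?g y)" using gf cl1 cl2 cl3 gc xy by simp
    have "?g (lbr M x y) = ?g (f (lbr L (?g x) (?g y)))"
      using h xy gc fg unfolding lie_hom_def by simp
    thus "?g (lbr M x y) = lbr L (?g x) (?g y)" using gf cl1 cl2 cl3 gc xy by simp
  next
    fix a x assume x: "x \<in> car M"
    have "?g (lsmul M a x) = ?g (f (lsmul L a (?g x)))"
      using h x gc fg unfolding lie_hom_def by simp
    thus "?g (lsmul M a x) = lsmul L a (?g x)" using gf cl1 cl2 cl3 gc x by simp
  qed
  thus ?thesis using b' unfolding lie_iso_def by blast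
qed

theorem corollary4p3:
  fixes g :: "('r::comm_ring_1, 'a) lie_alg" and q :: nat
  assumes "lie_algebra g"
  shows "q_capable g q TYPE('b) \<longleftrightarrow>
         (\<exists>M :: ('r, 'b) lie_alg. lie_algebra M \<and> lie_isomorphic g (IDer M q))"
proof
  assume "q_capable g q TYPE('b)"
  then obtain M :: "('r, 'b) lie_alg" and f where M: "lie_algebra M"
    and f: "lie_iso g (lie_quot M (Zq M q)) f"
    unfolding q_capable_def lie_isomorphic_def by blast
  interpret lie M by (rule lie.intro[OF M])
  have "lie_iso g (IDer M q) (phi q \<circ> f)" using iso_comp[OF f quot_iso] .
  thus "\<exists>M :: ('r, 'b) lie_alg. lie_algebra M \<and> lie_isomorphic g (IDer M q)"
    using M unfolding lie_isomorphic_def by blast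
next
  assume "\<exists>M :: ('r, 'b) lie_alg. lie_algebra M \<and> lie_isomorphic g (IDer M q)"
  then obtain M :: "('r, 'b) lie_alg" and f where M: "lie_algebra M"
    and f: "lie_iso g (IDer M q) f"
    unfolding lie_isomorphic_def by blast
  interpret lie M by (rule lie.intro[OF M])
  have "lie_iso (IDer M q) (lie_quot M (Zq M q)) (inv_into (car (lie_quot M (Zq M q))) (phi q))"
    by (rule iso_inv[OF quot_iso quot_closed1 quot_closed2 quot_closed3])
  from iso_comp[OF f this] show "q_capable g q TYPE('b)"
    using M unfolding q_capable_def lie_isomorphic_def by blast
qed

end
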